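(* Let $S=\{(a_i,b_i)\}_{i=1}^n\subset\mathbb R_{>0}\times\mathbb R_{\ge0}$ with $0<a_1<\cdots<a_n$, and let $f\in\mathbb R_{\ge0}[X]$ interpolate $S$. Then $f$ is the unique polynomial in $\mathbb R_{\ge0}[X]$ interpolating $S$ if and only if $f$ is the minimal polynomial of some proper subset $T\subsetneq S$.
   Context: $\mathbb R_{\ge0}[X]$ is the set of real polynomials with all coefficients nonnegative; $f$ interpolates a finite set $T$ of points $(a,b)$ if $f(a)=b$ for each. A finite sign sequence is $s\in\{-,0,+\}^\omega$ with finitely many nonzero entries ($\omega=\{0,1,\dots\}$); $\mathscr S$ is their set, $\mathscr S_+=\mathscr S\cap\{0,+\}^\omega$; $\mathrm{Sign}(f)$ is the sequence of signs of coefficients of $f$. $\mathrm{SC}(t)$ is the number of pairs $i<j$ with $\{t_i,t_j\}=\{-,+\}$ and $t_k=0$ for $i<k<j$. For $s\in\mathscr S_+$, $\mathfrak d(s)=\max\{\mathrm{SC}(t):t\in\mathscr S,\ t_i\in\{-,0,s_i\}\ \forall i\}$, $\mathfrak d(f)=\mathfrak d(\mathrm{Sign}(f))$. For a finite $T\subset\mathbb R_{>0}\times\mathbb R_{\ge0}$ with $\#T=m$ and pairwise distinct first coordinates, $f\in\mathbb R_{\ge0}[X]$ interpolating $T$ is the minimal polynomial of $T$ if $\mathfrak d(f)\le m$. *)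

theory Defs
  imports "HOL-Computational_Algebra.Polynomial"
begin

text \<open>Signs are encoded as integers: - is -1, 0 is 0, + is 1.\<close>

definition sign_seq :: "(nat \<Rightarrow> int) \<Rightarrow> bool" where
  "sign_seq t \<longleftrightarrow> (\<forall>i. t i \<in> {-1, 0, 1}) \<and> finite {i. t i \<noteq> 0}"

definition pos_sign_seq :: "(nat \<Rightarrow> int) \<Rightarrow> bool" where
  "pos_sign_seq s \<longleftrightarrow> sign_seq s \<and> (\<forall>i. s i \<in> {0, 1})"

definition Sign :: "real poly \<Rightarrow> nat \<Rightarrow> int" where
  "Sign f i = (if coeff f i > 0 then 1 else if coeff f i < 0 then -1 else 0)"

definition SC :: "(nat \<Rightarrow> int) \<Rightarrow> nat" where
  "SC t = card {(i, j). i < j \<and> {t i, t j} = {-1, 1} \<and> (\<forall>k. i < k \<and> k < j \<longrightarrow> t k = 0)}"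

definition dd :: "(nat \<Rightarrow> int) \<Rightarrow> nat" where
  "dd s = Max {SC t | t. sign_seq t \<and> (\<forall>i. t i \<in> {-1, 0, s i})}"

definition dd_poly :: "real poly \<Rightarrow> nat" where
  "dd_poly f = dd (Sign f)"

definition nonneg_poly :: "real poly \<Rightarrow> bool" where
  "nonneg_poly f \<longleftrightarrow> (\<forall>i. coeff f i \<ge> 0)"

definition interpolates :: "real poly \<Rightarrow> (real \<times> real) set \<Rightarrow> bool" where
  "interpolates f T \<longleftrightarrow> (\<forall>(a, b) \<in> T. poly f a = b)"

definition admissible_data :: "(real \<times> real) set \<Rightarrow> bool" where
  "admissible_data T \<longleftrightarrow> finite T \<and> (\<forall>(a, b) \<in> T. a > 0 \<and> b \<ge> 0) \<and> inj_on fst T"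

definition minimal_poly_of :: "(real \<times> real) set \<Rightarrow> real poly \<Rightarrow> bool" where
  "minimal_poly_of T f \<longleftrightarrow> admissible_data T \<and> nonneg_poly f \<and> interpolates f T
      \<and> dd_poly f \<le> card T"

end

theory Submission
  imports Defs
begin


definition PS :: "(nat \<Rightarrow> int) \<Rightarrow> (nat \<times> nat) set" where
  "PS t = {(i, j). i < j \<and> {t i, t j} = {-1, 1} \<and> (\<forall>k. i < k \<and> k < j \<longrightarrow> t k = 0)}"

lemma SC_PS: "SC t = card (PS t)" by (simp add: SC_def PS_def)

lemma pair_iff: "({a, b} = {-1, 1::int}) \<longleftrightarrow> (a = -1 \<and> b = 1) \<or> (a = 1 \<and> b = -1)"
  by (auto simp: doubleton_eq_iff)

lemma PS_mem: "(i,j) \<in> PS t \<longleftrightarrow> i < j \<and> ((t i = -1 \<and> t j = 1) \<or> (t i = 1 \<and> t j = -1)) \<and> (\<forall>k. i < k \<and> k < j \<longrightarrow> t k = 0)"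
  unfolding PS_def using pair_iff by auto

lemma PS_uniq1: "(i,j) \<in> PS t \<Longrightarrow> (i,j') \<in> PS t \<Longrightarrow> j = j'"
  unfolding PS_mem by (metis linorder_neqE_nat zero_neq_neg_one zero_neq_one)

lemma PS_uniq2: "(i,j) \<in> PS t \<Longrightarrow> (i',j) \<in> PS t \<Longrightarrow> i = i'"
  unfolding PS_mem by (metis linorder_neqE_nat zero_neq_neg_one zero_neq_one)

lemma PS_sub: "PS t \<subseteq> {i. t i \<noteq> 0} \<times> {i. t i \<noteq> 0}"
  by (auto simp add: PS_mem)

lemma SC_le_pos:
  assumes "finite {i. t i = 1}"
  shows "SC t \<le> 2 * card {i. t i = 1}"
proof -
  define \<phi> where "\<phi> = (\<lambda>(i::nat,j::nat). (if t i = 1 then i else j, t i = 1))"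
  have "inj_on \<phi> (PS t)"
  proof (rule inj_onI)
    fix x y assume x: "x \<in> PS t" and y: "y \<in> PS t" and e: "\<phi> x = \<phi> y"
    obtain i j where xi: "x = (i,j)" by (cases x)
    obtain i' j' where yi: "y = (i',j')" by (cases y)
    show "x = y"
    proof (cases "t i = 1")
      case True
      then have "i = i'" using e unfolding xi yi \<phi>_def by (auto split: if_splits)
      then show ?thesis using PS_uniq1 x y xi yi by blast
    next
      case False
      then have "j = j'" "t i' \<noteq> 1" using e unfolding xi yi \<phi>_def by (auto split: if_splits)
      then show ?thesis using PS_uniq2 x y xi yi by blast
    qed
  qed
  moreover have "\<phi> ` PS t \<subseteq> {i. t i = 1} \<times> UNIV"
    by (auto simp: \<phi>_def PS_mem)
  ultimately have "card (PS t) \<le> card ({i. t i = 1} \<times> (UNIV :: bool set))"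
    using assms by (intro card_inj_on_le) auto
  also have "\<dots> = 2 * card {i. t i = 1}" by (simp add: card_cartesian_product)
  finally show ?thesis by (simp add: SC_PS)
qed

lemma SC_le_supp:
  assumes "finite {i. t i \<noteq> 0}"
  shows "SC t \<le> card {i. t i \<noteq> 0} - 1"
proof (cases "{i. t i \<noteq> 0} = {}")
  case True
  then have "PS t = {}" using PS_sub by blast
  then show ?thesis by (simp add: SC_PS)
next
  case False
  define m where "m = Min {i. t i \<noteq> 0}"
  have "inj_on snd (PS t)"
    by (rule inj_onI) (metis PS_uniq2 prod.collapse)
  moreover have "snd ` PS t \<subseteq> {i. t i \<noteq> 0} - {m}"
  proof
    fix x assume "x \<in> snd ` PS t"
    then obtain i j where ij: "(i,j) \<in> PS t" "x = j" by force
    then have "t i \<noteq> 0" "t j \<noteq> 0" "i < j" unfolding PS_mem by auto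
    then have "m \<le> i" unfolding m_def using assms by simp
    then show "x \<in> {i. t i \<noteq> 0} - {m}" using ij \<open>t j \<noteq> 0\<close> \<open>i < j\<close> by auto
  qed
  ultimately have "card (PS t) \<le> card ({i. t i \<noteq> 0} - {m})"
    using assms by (intro card_inj_on_le) auto
  also have "\<dots> = card {i. t i \<noteq> 0} - 1"
  proof -
    have "m \<in> {i. t i \<noteq> 0}" using False assms unfolding m_def by (intro Min_in) auto
    then show ?thesis using assms by (simp add: card_Diff_singleton)
  qed
  finally show ?thesis by (simp add: SC_PS)
qed

lemma finite_PS: "finite {i. t i \<noteq> 0} \<Longrightarrow> finite (PS t)"
  using PS_sub finite_subset by blast

lemma PS_cons:
  "PS (case_nat a t) = (\<lambda>(i,j). (Suc i, Suc j)) ` PS t \<union>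
     {(0, Suc j) | j. a \<noteq> 0 \<and> ((a = -1 \<and> t j = 1) \<or> (a = 1 \<and> t j = -1)) \<and> (\<forall>k<j. t k = 0)}"
  (is "?L = ?A \<union> ?B")
proof (rule set_eqI)
  fix x :: "nat \<times> nat"
  obtain i j where x: "x = (i,j)" by (cases x)
  show "x \<in> ?L \<longleftrightarrow> x \<in> ?A \<union> ?B"
  proof (cases i)
    case 0
    have "x \<in> ?L \<longleftrightarrow> (\<exists>j'. j = Suc j' \<and> ((a = -1 \<and> t j' = 1) \<or> (a = 1 \<and> t j' = -1)) \<and> (\<forall>k<j'. t k = 0))"
      unfolding x 0 PS_mem
      apply (cases j)
       apply simp
      apply (auto simp: less_Suc_eq_0_disj)
      done
    then show ?thesis unfolding x 0 by auto
  next
    case (Suc i')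
    have "x \<in> ?L \<longleftrightarrow> (\<exists>j'. j = Suc j' \<and> (i', j') \<in> PS t)"
      unfolding x Suc PS_mem
      apply (cases j)
       apply simp
      apply (auto simp: less_Suc_eq_0_disj)
      done
    then show ?thesis unfolding x Suc by auto
  qed
qed

lemma SC_cons:
  assumes "finite {i. t i \<noteq> 0}"
  shows "SC (case_nat a t) = SC t + (if (\<exists>j. ((a = -1 \<and> t j = 1) \<or> (a = 1 \<and> t j = -1)) \<and> (\<forall>k<j. t k = 0)) then 1 else 0)"
proof -
  let ?A = "(\<lambda>(i,j). (Suc i, Suc j)) ` PS t"
  let ?B = "{(0::nat, Suc j) | j. a \<noteq> 0 \<and> ((a = -1 \<and> t j = 1) \<or> (a = 1 \<and> t j = -1)) \<and> (\<forall>k<j. t k = 0)}"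
  have fA: "finite ?A" using finite_PS[OF assms] by simp
  have cA: "card ?A = card (PS t)"
    by (rule card_image) (auto simp: inj_on_def)
  have cB: "card ?B = (if (\<exists>j. ((a = -1 \<and> t j = 1) \<or> (a = 1 \<and> t j = -1)) \<and> (\<forall>k<j. t k = 0)) then 1 else 0)"
  proof (cases "\<exists>j. ((a = -1 \<and> t j = 1) \<or> (a = 1 \<and> t j = -1)) \<and> (\<forall>k<j. t k = 0)")
    case True
    then obtain j where j: "((a = -1 \<and> t j = 1) \<or> (a = 1 \<and> t j = -1)) \<and> (\<forall>k<j. t k = 0)" by blast
    have u: "\<And>j'. ((a = -1 \<and> t j' = 1) \<or> (a = 1 \<and> t j' = -1)) \<and> (\<forall>k<j'. t k = 0) \<Longrightarrow> j' = j"
      using j by (metis linorder_neqE_nat zero_neq_neg_one zero_neq_one)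
    have B1: "?B = {(0, Suc j)}"
    proof
      show "?B \<subseteq> {(0,Suc j)}" using u by blast
      show "{(0,Suc j)} \<subseteq> ?B" using j by force
    qed
    show ?thesis unfolding B1 using True by simp
  next
    case False
    then have B0: "?B = {}" by auto
    show ?thesis unfolding B0 using False by simp
  qed
  have D: "?A \<inter> ?B = {}" by auto
  have fB: "finite ?B"
  proof (rule finite_subset)
    show "?B \<subseteq> (\<lambda>j. (0, Suc j)) ` {i. t i \<noteq> 0}" by auto
  qed (use assms in auto)
  have U: "card (?A \<union> ?B) = card ?A + card ?B"
    by (rule card_Un_disjoint[OF fA fB D])
  show ?thesis unfolding SC_PS PS_cons U cA cB by simp
qed



definition sgi :: "real \<Rightarrow> int" where
  "sgi x = (if x > 0 then 1 else if x < 0 then -1 else 0)"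

lemma Sign_sgi: "Sign p i = sgi (coeff p i)" by (simp add: Sign_def sgi_def)

lemma Sign_supp: "{i. Sign p i \<noteq> 0} = {i. coeff p i \<noteq> 0}"
  by (auto simp: Sign_def)

lemma finite_coeff_supp: "finite {i. coeff p i \<noteq> (0::'a::zero)}"
proof (rule finite_subset)
  show "{i. coeff p i \<noteq> 0} \<subseteq> {..degree p}" using le_degree by auto
qed auto

lemma finite_Sign_supp: "finite {i. Sign p i \<noteq> 0}"
  unfolding Sign_supp by (rule finite_coeff_supp)

lemma Sign_pCons: "Sign (pCons a q) = case_nat (sgi a) (Sign q)"
  by (rule ext, simp add: Sign_sgi coeff_pCons split: nat.splits)

lemma Sign_pderiv: "Sign (pderiv p) i = Sign p (Suc i)"
proof -
  have "of_nat (Suc i) > (0::real)" by simp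
  then show ?thesis unfolding Sign_def coeff_pderiv
    by (auto simp: zero_less_mult_iff mult_less_0_iff)
qed

lemma near0:
  fixes p :: "real poly"
  assumes "coeff p j \<noteq> 0" "\<forall>k<j. coeff p k = 0"
  shows "\<exists>\<delta>>0. \<forall>x. 0 < x \<and> x < \<delta> \<longrightarrow> sgn (poly p x) = sgn (coeff p j)"
  using assms
proof (induction j arbitrary: p)
  case 0
  let ?c = "coeff p 0"
  have "isCont (\<lambda>x. poly p x) 0" by simp
  then have "(\<lambda>x. poly p x) \<midarrow>0\<rightarrow> ?c" by (simp add: isCont_def poly_0_coeff_0)
  then obtain s where s: "s > 0" "\<And>x. x \<noteq> 0 \<Longrightarrow> norm (x - 0) < s \<Longrightarrow> norm (poly p x - ?c) < \<bar>?c\<bar>"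
    using 0 unfolding LIM_eq by (metis zero_less_abs_iff real_norm_def)
  show ?case
  proof (intro exI[of _ s] conjI allI impI)
    fix x :: real assume "0 < x \<and> x < s"
    then have "\<bar>poly p x - ?c\<bar> < \<bar>?c\<bar>" using s by auto
    then show "sgn (poly p x) = sgn ?c"
      by (cases "?c > 0") (auto simp: sgn_if abs_if split: if_splits)
  qed (use s in auto)
next
  case (Suc j)
  obtain a q where p: "p = pCons a q" by (cases p)
  have "coeff q j \<noteq> 0" "\<forall>k<j. coeff q k = 0" using Suc.prems unfolding p by auto
  from Suc.IH[OF this] obtain \<delta> where d: "\<delta> > 0" "\<forall>x. 0 < x \<and> x < \<delta> \<longrightarrow> sgn (poly q x) = sgn (coeff q j)" by blast
  have a: "a = 0" using Suc.prems(2) unfolding p by (metis coeff_pCons_0 zero_less_Suc)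
  show ?case
    using d unfolding p a by (auto simp: sgn_mult)
qed

lemma rolle_core:
  fixes p :: "real poly"
  assumes p0: "p \<noteq> 0" and d0: "pderiv p \<noteq> 0" and R: "{x. 0 < x \<and> poly p x = 0} \<noteq> {}"
  defines "m \<equiv> Min {x. 0 < x \<and> poly p x = 0}"
  shows "card {x. 0 < x \<and> poly p x = 0} - 1 \<le> card {x. m < x \<and> poly (pderiv p) x = 0}"
proof -
  let ?R = "{x. 0 < x \<and> poly p x = 0}"
  let ?D = "{x. m < x \<and> poly (pderiv p) x = 0}"
  have fR: "finite ?R" using poly_roots_finite[OF p0] by (rule rev_finite_subset) auto
  have fD: "finite ?D" using poly_roots_finite[OF d0] by (rule rev_finite_subset) auto
  have mR: "m \<in> ?R" unfolding m_def using fR R by (rule Min_in)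
  have mle: "\<And>y. y \<in> ?R \<Longrightarrow> m \<le> y" unfolding m_def using fR by simp
  define pr where "pr x = Max {y \<in> ?R. y < x}" for x
  have pr: "pr x \<in> ?R \<and> pr x < x \<and> m \<le> pr x \<and> (\<forall>y\<in>?R. y < x \<longrightarrow> y \<le> pr x)" if x: "x \<in> ?R - {m}" for x
  proof -
    have "m < x" using mle[of x] x by auto
    then have ne: "{y \<in> ?R. y < x} \<noteq> {}" using mR by blast
    have fin: "finite {y \<in> ?R. y < x}" using fR by (rule rev_finite_subset) auto
    have "pr x \<in> {y \<in> ?R. y < x}" unfolding pr_def using fin ne by (rule Max_in)
    moreover have "\<forall>y\<in>?R. y < x \<longrightarrow> y \<le> pr x" unfolding pr_def using fin by auto
    ultimately show ?thesis using mR \<open>m < x\<close> by auto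
  qed
  have ex: "\<exists>\<xi>. pr x < \<xi> \<and> \<xi> < x \<and> poly (pderiv p) \<xi> = 0" if x: "x \<in> ?R - {m}" for x
  proof -
    from pr[OF x] have "pr x < x" by auto
    from poly_MVT[OF this, of p] obtain \<xi> where \<xi>: "pr x < \<xi>" "\<xi> < x"
      "poly p x - poly p (pr x) = (x - pr x) * poly (pderiv p) \<xi>" by blast
    have "poly p x = 0" "poly p (pr x) = 0" using x pr[OF x] by auto
    then have "poly (pderiv p) \<xi> = 0" using \<xi> by simp
    with \<xi> show ?thesis by blast
  qed
  define \<phi> where "\<phi> x = (SOME \<xi>. pr x < \<xi> \<and> \<xi> < x \<and> poly (pderiv p) \<xi> = 0)" for x
  have \<phi>: "pr x < \<phi> x \<and> \<phi> x < x \<and> poly (pderiv p) (\<phi> x) = 0" if "x \<in> ?R - {m}" for x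
    unfolding \<phi>_def using someI_ex[OF ex[OF that]] .
  have "inj_on \<phi> (?R - {m})"
  proof (rule inj_onI, rule ccontr)
    fix x x' assume x: "x \<in> ?R - {m}" and x': "x' \<in> ?R - {m}" and e: "\<phi> x = \<phi> x'" and ne: "x \<noteq> x'"
    have *: False if "y \<in> ?R - {m}" "y' \<in> ?R - {m}" "y < y'" "\<phi> y = \<phi> y'" for y y'
    proof -
      have "y \<le> pr y'" using pr[OF that(2)] that(1,3) by auto
      then show False using \<phi>[OF that(1)] \<phi>[OF that(2)] that(4) by auto
    qed
    from ne have "x < x' \<or> x' < x" by auto
    then show False using *[OF x x' _ e] *[OF x' x _ e[symmetric]] by blast
  qed
  moreover have "\<phi> ` (?R - {m}) \<subseteq> ?D"
  proof
    fix z assume "z \<in> \<phi> ` (?R - {m})"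
    then obtain x where x: "x \<in> ?R - {m}" "z = \<phi> x" by blast
    show "z \<in> ?D" using \<phi>[OF x(1)] pr[OF x(1)] x(2) by auto
  qed
  ultimately have "card (?R - {m}) \<le> card ?D" using fD by (intro card_inj_on_le)
  then show ?thesis using mR fR by (simp add: card_Diff_singleton)
qed



lemma descartes:
  fixes p :: "real poly"
  assumes "p \<noteq> 0"
  shows "card {x. 0 < x \<and> poly p x = 0} \<le> SC (Sign p)"
  using assms
proof (induction "degree p" arbitrary: p rule: less_induct)
  case less
  obtain a q where p: "p = pCons a q" by (cases p)
  have fq: "finite {i. Sign q i \<noteq> 0}" by (rule finite_Sign_supp)
  have SCp: "SC (Sign p) = SC (Sign q) + (if \<exists>j. ((sgi a = -1 \<and> Sign q j = 1) \<or> (sgi a = 1 \<and> Sign q j = -1)) \<and> (\<forall>k<j. Sign q k = 0) then 1 else 0)"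
    unfolding p Sign_pCons by (rule SC_cons[OF fq])
  show ?case
  proof (cases "a = 0")
    case True
    then have q0: "q \<noteq> 0" using less.prems p by auto
    have dq: "degree q < degree p" unfolding p using q0 by (simp add: degree_pCons_eq)
    have roots: "{x. 0 < x \<and> poly p x = 0} = {x. 0 < x \<and> poly q x = 0}" unfolding p True by auto
    have "SC (Sign p) = SC (Sign q)" using SCp True by (simp add: sgi_def)
    then show ?thesis using less.hyps[OF dq q0] roots by simp
  next
    case False
    show ?thesis
    proof (cases "q = 0")
      case True
      then have e: "{x. 0 < x \<and> poly p x = 0} = {}" using False unfolding p by auto
      show ?thesis unfolding e by simp
    next
      case q0: False
      let ?d = "pderiv p"
      have dp: "degree p = Suc (degree q)" unfolding p using q0 by (simp add: degree_pCons_eq)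
      have d0: "?d \<noteq> 0" by (metis pderiv_eq_0_iff dp nat.distinct(1))
      have dd: "degree ?d < degree p" using degree_pderiv[of p] dp by simp
      have Sd: "Sign ?d = Sign q" by (rule ext) (simp add: Sign_pderiv p Sign_pCons)
      let ?R = "{x. 0 < x \<and> poly p x = 0}"
      let ?Rd = "{x. 0 < x \<and> poly ?d x = 0}"
      have IH: "card ?Rd \<le> SC (Sign q)" using less.hyps[OF dd d0] Sd by simp
      have fRd: "finite ?Rd" using poly_roots_finite[OF d0] by (rule rev_finite_subset) auto
      have fR: "finite ?R" using poly_roots_finite[OF less.prems] by (rule rev_finite_subset) auto
      show ?thesis
      proof (cases "?R = {}")
        case True show ?thesis unfolding True by simp
      next
        case Rne: False
        define m where "m = Min ?R"
        have core: "card ?R - 1 \<le> card {x. m < x \<and> poly ?d x = 0}"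
          unfolding m_def by (rule rolle_core[OF less.prems d0 Rne])
        have mR: "m \<in> ?R" unfolding m_def using fR Rne by (rule Min_in)
        then have m0: "0 < m" "poly p m = 0" by auto
        have sub: "{x. m < x \<and> poly ?d x = 0} \<subseteq> ?Rd" using m0 by auto
        have cs: "card {x. m < x \<and> poly ?d x = 0} \<le> card ?Rd" by (rule card_mono[OF fRd sub])
        show ?thesis
        proof (cases "\<exists>j. ((sgi a = -1 \<and> Sign q j = 1) \<or> (sgi a = 1 \<and> Sign q j = -1)) \<and> (\<forall>k<j. Sign q k = 0)")
          case True
          then have "SC (Sign p) = SC (Sign q) + 1" using SCp by simp
          then show ?thesis using core IH cs by linarith
        next
          case opp: False
          then have SCe: "SC (Sign p) = SC (Sign q)" using SCp by simp
          have exq: "\<exists>i. coeff q i \<noteq> 0" using q0 by (metis coeff_0 poly_eqI)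
          define j where "j = (LEAST i. coeff q i \<noteq> 0)"
          have j: "coeff q j \<noteq> 0" "\<forall>k<j. coeff q k = 0"
            unfolding j_def using LeastI_ex[OF exq] not_less_Least by auto
          have sj: "Sign q j = sgi a"
          proof -
            have "\<forall>k<j. Sign q k = 0" using j by (simp add: Sign_def)
            then have "\<not> ((sgi a = -1 \<and> Sign q j = 1) \<or> (sgi a = 1 \<and> Sign q j = -1))" using opp by blast
            then show ?thesis using j(1) False by (auto simp: Sign_def sgi_def split: if_splits)
          qed
          have cdj: "coeff ?d j = of_nat (Suc j) * coeff q j" by (simp add: coeff_pderiv p)
          have cdk: "\<forall>k<j. coeff ?d k = 0" using j by (simp add: coeff_pderiv p)
          have sgdj: "sgn (coeff ?d j) = sgn a"
            using sj j(1) False unfolding cdj by (auto simp: Sign_def sgi_def sgn_mult split: if_splits)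
          obtain \<delta> where \<delta>: "\<delta> > 0" "\<forall>x. 0 < x \<and> x < \<delta> \<longrightarrow> sgn (poly ?d x) = sgn a"
            using near0[of ?d j] cdj cdk j(1) sgdj by auto
          obtain \<xi> where \<xi>: "0 < \<xi>" "\<xi> < m" "poly p m - poly p 0 = (m - 0) * poly ?d \<xi>"
            using poly_MVT[OF m0(1), of p] by blast
          have "poly p 0 = a" unfolding p by simp
          then have "poly ?d \<xi> = - a / m" using \<xi>(3) m0 by (simp add: field_simps)
          then have sx: "sgn (poly ?d \<xi>) = - sgn a" using m0(1) by (simp add: sgn_divide)
          define x0 where "x0 = min (\<delta>/2) (\<xi>/2)"
          have x0: "0 < x0" "x0 < \<delta>" "x0 < \<xi>" unfolding x0_def using \<delta> \<xi> by auto
          have s0: "sgn (poly ?d x0) = sgn a" using \<delta>(2) x0 by auto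
          have a0: "a \<noteq> 0" using False .
          have "poly ?d x0 * poly ?d \<xi> < 0"
          proof (cases "a > 0")
            case True then have "poly ?d x0 > 0" "poly ?d \<xi> < 0" using s0 sx by (auto simp: sgn_if split: if_splits)
            then show ?thesis by (simp add: mult_pos_neg)
          next
            case False then have "a < 0" using a0 by auto
            then have "poly ?d x0 < 0" "poly ?d \<xi> > 0" using s0 sx by (auto simp: sgn_if split: if_splits)
            then show ?thesis by (simp add: mult_neg_pos)
          qed
          from poly_IVT[OF x0(3) this] obtain y where y: "x0 < y" "y < \<xi>" "poly ?d y = 0" by blast
          have yin: "y \<in> ?Rd" using y x0 by auto
          have ynot: "y \<notin> {x. m < x \<and> poly ?d x = 0}" using y \<xi> by auto
          have "insert y {x. m < x \<and> poly ?d x = 0} \<subseteq> ?Rd" using yin sub by auto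
          then have "card (insert y {x. m < x \<and> poly ?d x = 0}) \<le> card ?Rd" by (rule card_mono[OF fRd])
          moreover have "finite {x. m < x \<and> poly ?d x = 0}" using fRd sub by (rule finite_subset[rotated])
          ultimately have "card {x. m < x \<and> poly ?d x = 0} + 1 \<le> card ?Rd" using ynot by simp
          then show ?thesis using core IH SCe by linarith
        qed
      qed
    qed
  qed
qed



lemma Sign_vals: "Sign p i \<in> {-1, 0, 1}" by (simp add: Sign_def)

lemma desc_alt:
  fixes h :: "real poly" and e :: "nat \<Rightarrow> nat"
  assumes h0: "h \<noteq> 0" and e: "strict_mono e" and supp: "\<forall>i. coeff h i \<noteq> 0 \<longrightarrow> i \<in> e ` {..n}"
    and A: "A \<subseteq> {x. 0 < x \<and> poly h x = 0}" and cA: "card A = n"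
  shows "(\<forall>k\<le>n. coeff h (e k) \<noteq> 0) \<and> (\<forall>k<n. Sign h (e (Suc k)) = - Sign h (e k))"
proof -
  let ?t = "Sign h"
  have fR: "finite {x. 0 < x \<and> poly h x = 0}" using poly_roots_finite[OF h0] by (rule rev_finite_subset) auto
  have "n \<le> card {x. 0 < x \<and> poly h x = 0}" using card_mono[OF fR A] cA by simp
  also have "\<dots> \<le> SC ?t" by (rule descartes[OF h0])
  finally have nSC: "n \<le> SC ?t" .
  have ss: "{i. ?t i \<noteq> 0} \<subseteq> e ` {..n}" using supp Sign_supp by auto
  have ce: "card (e ` {..n}) = Suc n"
    using e by (simp add: card_image strict_mono_imp_inj_on)
  have "SC ?t \<le> card {i. ?t i \<noteq> 0} - 1" by (rule SC_le_supp[OF finite_Sign_supp])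
  moreover have "\<exists>i. coeff h i \<noteq> 0" using h0 by (metis coeff_0 poly_eqI)
  then have "{i. ?t i \<noteq> 0} \<noteq> {}" using Sign_supp by auto
  then have "card {i. ?t i \<noteq> 0} > 0" using finite_Sign_supp card_gt_0_iff by blast
  ultimately have "Suc n \<le> card {i. ?t i \<noteq> 0}" using nSC by linarith
  then have seq: "{i. ?t i \<noteq> 0} = e ` {..n}"
    using ss ce by (intro card_seteq) auto
  have nz: "\<forall>k\<le>n. coeff h (e k) \<noteq> 0"
  proof (intro allI impI)
    fix k assume "k \<le> n"
    then have "e k \<in> {i. ?t i \<noteq> 0}" using seq by auto
    then show "coeff h (e k) \<noteq> 0" using Sign_supp by auto
  qed
  let ?K = "{k. k < n \<and> ?t (e (Suc k)) = - ?t (e k)}"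
  have "PS ?t \<subseteq> (\<lambda>k. (e k, e (Suc k))) ` ?K"
  proof
    fix x assume x: "x \<in> PS ?t"
    obtain i j where ij: "x = (i,j)" by (cases x)
    have m: "i < j" "(?t i = -1 \<and> ?t j = 1) \<or> (?t i = 1 \<and> ?t j = -1)" "\<forall>k. i < k \<and> k < j \<longrightarrow> ?t k = 0"
      using x unfolding ij PS_mem by auto
    then have "i \<in> {i. ?t i \<noteq> 0}" "j \<in> {i. ?t i \<noteq> 0}" by auto
    then obtain k k' where kk: "k \<le> n" "k' \<le> n" "i = e k" "j = e k'" using seq by auto
    have "k < k'" using m(1) kk e by (metis strict_mono_less)
    have "k' = Suc k"
    proof (rule ccontr)
      assume "k' \<noteq> Suc k"
      then have "Suc k < k'" using \<open>k < k'\<close> by auto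
      then have "e k < e (Suc k)" "e (Suc k) < e k'" using e by (auto simp: strict_mono_less)
      then have "?t (e (Suc k)) = 0" using m(3) kk by auto
      moreover have "e (Suc k) \<in> {i. ?t i \<noteq> 0}" using seq \<open>Suc k < k'\<close> kk(2) by auto
      ultimately show False by simp
    qed
    then have "k \<in> ?K" using m(2) kk by auto
    then show "x \<in> (\<lambda>k. (e k, e (Suc k))) ` ?K" using ij kk \<open>k' = Suc k\<close> by auto
  qed
  then have "card (PS ?t) \<le> card ((\<lambda>k. (e k, e (Suc k))) ` ?K)"
    by (rule card_mono[rotated]) auto
  also have "\<dots> \<le> card ?K" by (rule card_image_le) auto
  finally have "n \<le> card ?K" using nSC by (simp add: SC_PS)
  then have "?K = {..<n}" by (intro card_seteq) auto
  then have "\<forall>k<n. ?t (e (Suc k)) = - ?t (e k)" by blast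
  with nz show ?thesis by blast
qed

lemma exists_h:
  fixes e :: "nat \<Rightarrow> nat"
  shows "finite A \<Longrightarrow> A \<subseteq> {0<..} \<Longrightarrow> strict_mono e \<Longrightarrow> card A = n \<Longrightarrow>
    \<exists>h::real poly. h \<noteq> 0 \<and> (\<forall>i. coeff h i \<noteq> 0 \<longrightarrow> i \<in> e ` {..n}) \<and> (\<forall>a\<in>A. poly h a = 0)"
proof (induction n arbitrary: A e)
  case 0
  then have "A = {}" by simp
  then show ?case by (intro exI[of _ "monom 1 (e 0)"]) (auto simp: coeff_monom split: if_splits)
next
  case (Suc n)
  then obtain a where a: "a \<in> A" by fastforce
  let ?A = "A - {a}"
  have fA: "finite ?A" "?A \<subseteq> {0<..}" "card ?A = n" using Suc.prems a by auto
  have e2: "strict_mono (e \<circ> Suc)" using Suc.prems(3) by (simp add: strict_mono_def)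
  obtain h1 where h1: "h1 \<noteq> 0" "\<forall>i. coeff h1 i \<noteq> 0 \<longrightarrow> i \<in> e ` {..n}" "\<forall>a\<in>?A. poly h1 a = 0"
    using Suc.IH[OF fA(1,2) Suc.prems(3) fA(3)] by blast
  obtain h2 where h2: "h2 \<noteq> 0" "\<forall>i. coeff h2 i \<noteq> 0 \<longrightarrow> i \<in> (e \<circ> Suc) ` {..n}" "\<forall>a\<in>?A. poly h2 a = 0"
    using Suc.IH[OF fA(1,2) e2 fA(3)] by blast
  have c1: "coeff h1 (e 0) \<noteq> 0"
    using desc_alt[OF h1(1) Suc.prems(3) h1(2), of ?A] h1(3) fA by auto
  have c2: "coeff h2 (e 0) = 0"
  proof (rule ccontr)
    assume "coeff h2 (e 0) \<noteq> 0"
    then obtain k where "e 0 = e (Suc k)" using h2(2) by auto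
    then show False using Suc.prems(3) by (metis nat.distinct(1) strict_mono_eq)
  qed
  have sup1: "\<forall>i. coeff h1 i \<noteq> 0 \<longrightarrow> i \<in> e ` {..Suc n}" using h1(2) by auto
  have sup2: "\<forall>i. coeff h2 i \<noteq> 0 \<longrightarrow> i \<in> e ` {..Suc n}" using h2(2) by force
  show ?case
  proof (cases "poly h1 a = 0")
    case True
    then show ?thesis using h1 sup1 by (intro exI[of _ h1]) auto
  next
    case n1: False
    show ?thesis
    proof (cases "poly h2 a = 0")
      case True
      then show ?thesis using h2 sup2 by (intro exI[of _ h2]) auto
    next
      case n2: False
      define h where "h = smult (poly h2 a) h1 - smult (poly h1 a) h2"
      have ch: "coeff h i = poly h2 a * coeff h1 i - poly h1 a * coeff h2 i" for i
        by (simp add: h_def)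
      have "coeff h (e 0) \<noteq> 0" unfolding ch using c1 c2 n2 by simp
      then have "h \<noteq> 0" by auto
      moreover have "\<forall>i. coeff h i \<noteq> 0 \<longrightarrow> i \<in> e ` {..Suc n}"
      proof (intro allI impI)
        fix i assume "coeff h i \<noteq> 0"
        then have "coeff h1 i \<noteq> 0 \<or> coeff h2 i \<noteq> 0" unfolding ch by auto
        then show "i \<in> e ` {..Suc n}" using sup1 sup2 by blast
      qed
      moreover have "\<forall>x\<in>A. poly h x = 0"
      proof
        fix x assume "x \<in> A"
        then show "poly h x = 0" using h1(3) h2(3) unfolding h_def
          by (cases "x = a") (auto simp: algebra_simps)
      qed
      ultimately show ?thesis by blast
    qed
  qed
qed



definition chain :: "(nat \<Rightarrow> int) \<Rightarrow> (nat \<Rightarrow> nat) \<Rightarrow> nat \<Rightarrow> bool" where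
  "chain t e n \<longleftrightarrow> strict_mono e \<and> (\<forall>k\<le>n. t (e k) \<noteq> 0) \<and> (\<forall>k<n. t (e (Suc k)) = - t (e k))"

lemma SC_zero: "SC (\<lambda>_. 0) = 0"
proof -
  have "PS (\<lambda>_. 0) = {}" unfolding PS_def by auto
  then show ?thesis by (simp add: SC_PS)
qed

lemma chain_ex_aux:
  "\<forall>t n. (\<forall>i. t i \<in> {-1,0,1}) \<longrightarrow> (\<forall>i\<ge>N. t i = 0) \<longrightarrow> (\<exists>i. t i \<noteq> 0) \<longrightarrow> n \<le> SC t
     \<longrightarrow> (\<exists>e. chain t e n \<and> e 0 = (LEAST i. t i \<noteq> 0))"
proof (induction N)
  case 0
  then show ?case by auto
next
  case (Suc N)
  show ?case
  proof (intro allI impI)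
    fix t :: "nat \<Rightarrow> int" and n
    assume sv: "\<forall>i. t i \<in> {-1,0,1}" and bd: "\<forall>i\<ge>Suc N. t i = 0" and nz: "\<exists>i. t i \<noteq> 0" and nS: "n \<le> SC t"
    define t' where "t' = (\<lambda>i. t (Suc i))"
    have sv': "\<forall>i. t' i \<in> {-1,0,1}" using sv by (simp add: t'_def)
    have bd': "\<forall>i\<ge>N. t' i = 0" using bd by (simp add: t'_def)
    have teq: "t = case_nat (t 0) t'" by (rule ext) (simp add: t'_def split: nat.splits)
    have fin': "finite {i. t' i \<noteq> 0}"
      by (rule finite_subset[of _ "{..<N}"]) (use bd' in \<open>auto simp: not_less[symmetric]\<close>)
    define cond where "cond = (\<exists>j. ((t 0 = -1 \<and> t' j = 1) \<or> (t 0 = 1 \<and> t' j = -1)) \<and> (\<forall>k<j. t' k = 0))"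
    have SCe: "SC t = SC t' + (if cond then 1 else 0)"
      unfolding cond_def by (subst teq) (rule SC_cons[OF fin'])
    show "\<exists>e. chain t e n \<and> e 0 = (LEAST i. t i \<noteq> 0)"
    proof (cases "t 0 = 0")
      case True
      then have nz': "\<exists>i. t' i \<noteq> 0" using nz unfolding t'_def by (metis not0_implies_Suc)
      have "\<not> cond" unfolding cond_def using True by simp
      then have "n \<le> SC t'" using nS SCe by simp
      then obtain e' where e': "chain t' e' n" "e' 0 = (LEAST i. t' i \<noteq> 0)"
        using Suc.IH sv' bd' nz' by blast
      define e where "e = (\<lambda>k. Suc (e' k))"
      have "chain t e n" using e'(1) unfolding chain_def e_def t'_def by (simp add: strict_mono_def)
      moreover have "e 0 = (LEAST i. t i \<noteq> 0)"
      proof -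
        obtain i where "t i \<noteq> 0" using nz by blast
        then have "(LEAST i. t i \<noteq> 0) = Suc (LEAST m. t (Suc m) \<noteq> 0)" using True by (intro Least_Suc) auto
        then show ?thesis unfolding e_def e'(2) t'_def by simp
      qed
      ultimately show ?thesis by blast
    next
      case t0: False
      have L0: "(LEAST i. t i \<noteq> 0) = 0" using t0 by (simp add: Least_eq_0)
      show ?thesis
      proof (cases n)
        case 0
        have "chain t (\<lambda>k. k) n" unfolding chain_def 0 using t0 by (simp add: strict_mono_def)
        then show ?thesis using L0 by auto
      next
        case (Suc m)
        have nz': "\<exists>i. t' i \<noteq> 0"
        proof (rule ccontr)
          assume "\<not> (\<exists>i. t' i \<noteq> 0)"
          then have z: "t' = (\<lambda>_. 0)" by auto
          then have "\<not> cond" unfolding cond_def by simp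
          then show False using SCe nS Suc z SC_zero by simp
        qed
        define j where "j = (LEAST i. t' i \<noteq> 0)"
        have j: "t' j \<noteq> 0" "\<forall>k<j. t' k = 0" unfolding j_def using LeastI_ex[OF nz'] not_less_Least by auto
        show ?thesis
        proof (cases cond)
          case True
          then have "m \<le> SC t'" using nS SCe Suc by simp
          then obtain e' where e': "chain t' e' m" "e' 0 = j"
            using Suc.IH sv' bd' nz' unfolding j_def by blast
          have opp: "t' j = - t 0"
          proof -
            obtain j' where j': "((t 0 = -1 \<and> t' j' = 1) \<or> (t 0 = 1 \<and> t' j' = -1))" "\<forall>k<j'. t' k = 0"
              using True unfolding cond_def by blast
            have "j' = j" using j j' by (metis linorder_neqE_nat zero_neq_neg_one zero_neq_one)
            then show ?thesis using j' by auto
          qed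
          define e where "e = (\<lambda>k. case k of 0 \<Rightarrow> 0 | Suc k \<Rightarrow> Suc (e' k))"
          have "strict_mono e" unfolding strict_mono_Suc_iff
          proof
            fix k show "e k < e (Suc k)"
              using e'(1) unfolding e_def chain_def by (cases k) (auto simp: strict_mono_def)
          qed
          moreover have "\<forall>k\<le>n. t (e k) \<noteq> 0"
          proof (intro allI impI)
            fix k assume "k \<le> n"
            then show "t (e k) \<noteq> 0" using e'(1) t0 Suc unfolding e_def chain_def t'_def by (cases k) auto
          qed
          moreover have "\<forall>k<n. t (e (Suc k)) = - t (e k)"
          proof (intro allI impI)
            fix k assume "k < n"
            then show "t (e (Suc k)) = - t (e k)"
              using e'(1) opp e'(2) Suc unfolding e_def chain_def t'_def by (cases k) auto
          qed
          ultimately show ?thesis using L0 unfolding chain_def e_def by auto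
        next
          case False
          then have "Suc m \<le> SC t'" using nS SCe Suc by simp
          then obtain e' where e': "chain t' e' (Suc m)" "e' 0 = j"
            using Suc.IH sv' bd' nz' unfolding j_def by blast
          have same: "t' j = t 0"
          proof -
            have "\<not> ((t 0 = -1 \<and> t' j = 1) \<or> (t 0 = 1 \<and> t' j = -1))" using False j unfolding cond_def by blast
            moreover have "t 0 \<in> {-1,0,1}" "t' j \<in> {-1,0,1}" using sv sv' by auto
            ultimately show ?thesis using j(1) t0 by auto
          qed
          define e where "e = (\<lambda>k. case k of 0 \<Rightarrow> 0 | Suc k \<Rightarrow> Suc (e' (Suc k)))"
          have "strict_mono e" unfolding strict_mono_Suc_iff
          proof
            fix k show "e k < e (Suc k)"
              using e'(1) unfolding e_def chain_def by (cases k) (auto simp: strict_mono_def)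
          qed
          moreover have "\<forall>k\<le>n. t (e k) \<noteq> 0"
          proof (intro allI impI)
            fix k assume "k \<le> n"
            then show "t (e k) \<noteq> 0" using e'(1) t0 Suc unfolding e_def chain_def t'_def by (cases k) auto
          qed
          moreover have "\<forall>k<n. t (e (Suc k)) = - t (e k)"
          proof (intro allI impI)
            fix k assume "k < n"
            then show "t (e (Suc k)) = - t (e k)"
              using e'(1) same e'(2) Suc unfolding e_def chain_def t'_def by (cases k) auto
          qed
          ultimately show ?thesis using L0 unfolding chain_def e_def by auto
        qed
      qed
    qed
  qed
qed



lemma chain_ex:
  assumes "sign_seq t" "1 \<le> n" "n \<le> SC t"
  shows "\<exists>e. chain t e n"
proof -
  have sv: "\<forall>i. t i \<in> {-1,0,1}" and fin: "finite {i. t i \<noteq> 0}" using assms(1) unfolding sign_seq_def by auto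
  obtain N where N: "\<forall>i\<in>{i. t i \<noteq> 0}. i < N" using fin finite_nat_set_iff_bounded by blast
  then have bd: "\<forall>i\<ge>N. t i = 0" by (metis leD mem_Collect_eq)
  have nz: "\<exists>i. t i \<noteq> 0"
  proof (rule ccontr)
    assume "\<not> (\<exists>i. t i \<noteq> 0)"
    then have "t = (\<lambda>_. 0)" by auto
    then show False using assms SC_zero by simp
  qed
  show ?thesis using chain_ex_aux[of N] sv bd nz assms(3) by blast
qed

definition dset :: "(nat \<Rightarrow> int) \<Rightarrow> nat set" where
  "dset s = {SC t | t. sign_seq t \<and> (\<forall>i. t i \<in> {-1, 0, s i})}"

lemma dd_dset: "dd s = Max (dset s)" by (simp add: dd_def dset_def)

lemma dset_fin: "finite (dset (Sign f))"
proof (rule finite_subset)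
  show "dset (Sign f) \<subseteq> {..2 * card {i. Sign f i \<noteq> 0}}"
  proof
    fix x assume "x \<in> dset (Sign f)"
    then obtain t where t: "x = SC t" "sign_seq t" "\<forall>i. t i \<in> {-1, 0, Sign f i}" unfolding dset_def by blast
    have sub: "{i. t i = 1} \<subseteq> {i. Sign f i \<noteq> 0}"
    proof
      fix i assume "i \<in> {i. t i = 1}"
      moreover have "t i \<in> {-1, 0, Sign f i}" using t(3) by blast
      ultimately show "i \<in> {i. Sign f i \<noteq> 0}" by auto
    qed
    have "SC t \<le> 2 * card {i. t i = 1}"
      by (rule SC_le_pos) (rule finite_subset[OF sub finite_Sign_supp])
    also have "\<dots> \<le> 2 * card {i. Sign f i \<noteq> 0}" using card_mono[OF finite_Sign_supp sub] by simp
    finally show "x \<in> {..2 * card {i. Sign f i \<noteq> 0}}" using t(1) by simp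
  qed
qed simp

lemma dset_ne: "dset s \<noteq> {}"
proof -
  have "SC (\<lambda>_. 0) \<in> dset s" unfolding dset_def sign_seq_def by auto
  then show ?thesis by blast
qed

lemma Sign_sign_seq: "sign_seq (Sign p)"
  unfolding sign_seq_def using Sign_vals finite_Sign_supp by blast

theorem mainTheorem5:
  fixes S :: "(real \<times> real) set" and f :: "real poly"
  assumes "admissible_data S"
    and "nonneg_poly f"
    and "interpolates f S"
  shows "(\<forall>g. nonneg_poly g \<and> interpolates g S \<longrightarrow> g = f)
         \<longleftrightarrow> (\<exists>T. T \<subset> S \<and> minimal_poly_of T f)"
proof -
  have finS: "finite S" and posS: "\<forall>(a, b) \<in> S. a > 0 \<and> b \<ge> 0" and injS: "inj_on fst S"
    using assms(1) unfolding admissible_data_def by auto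
  define A where "A = fst ` S"
  have cA: "card A = card S" unfolding A_def using injS by (rule card_image)
  have finA: "finite A" unfolding A_def using finS by simp
  have Apos: "A \<subseteq> {0<..}" unfolding A_def using posS by auto
  have fA: "\<And>g a. interpolates g S \<Longrightarrow> a \<in> A \<Longrightarrow> poly g a = poly f a"
    unfolding A_def interpolates_def using assms(3) unfolding interpolates_def by force
  have fnn: "\<And>i. coeff f i \<ge> 0" using assms(2) unfolding nonneg_poly_def by auto
  show ?thesis
  proof
    assume uniq: "\<forall>g. nonneg_poly g \<and> interpolates g S \<longrightarrow> g = f"
    have Sne: "S \<noteq> {}"
    proof
      assume S0: "S = {}"
      have "nonneg_poly (f + 1)" unfolding nonneg_poly_def using fnn by (simp add: coeff_1 add_nonneg_nonneg)
      moreover have "interpolates (f + 1) S" unfolding interpolates_def S0 by simp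
      ultimately have "f + 1 = f" using uniq by blast
      then show False by (metis add_cancel_left_right one_neq_zero)
    qed
    then obtain x where x: "x \<in> S" by blast
    let ?T = "S - {x}"
    have TS: "?T \<subset> S" using x by auto
    have cT: "card ?T = card S - 1" using x finS by simp
    have ddle: "dd_poly f \<le> card ?T"
    proof (rule ccontr)
      assume "\<not> dd_poly f \<le> card ?T"
      then have nle: "card S \<le> dd (Sign f)" using cT Sne finS unfolding dd_poly_def
        by (metis One_nat_def Suc_pred card_gt_0_iff not_less_eq_eq)
      let ?n = "card S"
      have n1: "1 \<le> ?n" using Sne finS by (simp add: Suc_leI card_gt_0_iff)
      have "dd (Sign f) \<in> dset (Sign f)" unfolding dd_dset using dset_fin dset_ne by (rule Max_in)
      then obtain t where t: "dd (Sign f) = SC t" "sign_seq t" "\<forall>i. t i \<in> {-1, 0, Sign f i}"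
        unfolding dset_def by blast
      have nSC: "?n \<le> SC t" using nle t(1) by simp
      obtain e where e: "chain t e ?n" using chain_ex[OF t(2) n1 nSC] by blast
      have em: "strict_mono e" using e unfolding chain_def by simp
      obtain h :: "real poly" where h: "h \<noteq> 0" "\<forall>i. coeff h i \<noteq> 0 \<longrightarrow> i \<in> e ` {..?n}" "\<forall>a\<in>A. poly h a = 0"
        using exists_h[OF finA Apos em cA] by blast
      have Ar: "A \<subseteq> {x. 0 < x \<and> poly h x = 0}" using Apos h(3) by auto
      have alt: "(\<forall>k\<le>?n. coeff h (e k) \<noteq> 0) \<and> (\<forall>k<?n. Sign h (e (Suc k)) = - Sign h (e k))"
        by (rule desc_alt[OF h(1) em h(2) Ar cA])
      define \<sigma> where "\<sigma> = t (e 0) * Sign h (e 0)"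
      have t0: "t (e 0) \<in> {-1, 1}" using e t(2) unfolding chain_def sign_seq_def by auto
      have h0: "Sign h (e 0) \<in> {-1, 1}" using alt Sign_vals[of h "e 0"] by (auto simp: Sign_def)
      have sig: "\<sigma> \<in> {-1, 1}" unfolding \<sigma>_def using t0 h0 by auto
      have match: "Sign h (e k) * \<sigma> = t (e k)" if "k \<le> ?n" for k
        using that
      proof (induction k)
        case 0
        then show ?case unfolding \<sigma>_def using h0 by auto
      next
        case (Suc k)
        then have "Sign h (e k) * \<sigma> = t (e k)" by simp
        moreover have "Sign h (e (Suc k)) = - Sign h (e k)" using alt Suc.prems by auto
        moreover have "t (e (Suc k)) = - t (e k)" using e Suc.prems unfolding chain_def by auto
        ultimately show ?case by simp
      qed
      define h' where "h' = smult (of_int \<sigma>) h"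
      have ch': "coeff h' i = of_int \<sigma> * coeff h i" for i by (simp add: h'_def)
      have hpos: "coeff f i > 0" if "coeff h' i > 0" for i
      proof -
        have "coeff h i \<noteq> 0" using that ch' by auto
        then obtain k where k: "k \<le> ?n" "i = e k" using h(2) by auto
        have "Sign h' i = Sign h i * \<sigma>" using sig unfolding Sign_def ch'
          by (auto simp: zero_less_mult_iff mult_less_0_iff)
        then have "Sign h' i = t i" using match[OF k(1)] k(2) by simp
        moreover have "Sign h' i = 1" using that by (simp add: Sign_def)
        ultimately have "t i = 1" by simp
        moreover have "t i \<in> {-1, 0, Sign f i}" using t(3) by blast
        ultimately have "Sign f i = 1" by auto
        then show ?thesis by (simp add: Sign_def split: if_splits)
      qed
      have h'0: "h' \<noteq> 0" using h sig unfolding h'_def by auto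
      define I where "I = {i. coeff h' i > 0}"
      have finI: "finite I" unfolding I_def by (rule finite_subset[OF _ finite_coeff_supp[of h']]) auto
      define \<epsilon> where "\<epsilon> = Min (insert 1 ((\<lambda>i. coeff f i / coeff h' i) ` I))"
      have finE: "finite (insert 1 ((\<lambda>i. coeff f i / coeff h' i) ` I))" using finI by simp
      have eps: "\<epsilon> > 0" unfolding \<epsilon>_def using finE
        by (subst Min_gr_iff) (auto simp: I_def hpos)
      have epsle: "\<epsilon> \<le> coeff f i / coeff h' i" if "i \<in> I" for i
        unfolding \<epsilon>_def using finE that by (intro Min_le) auto
      define g where "g = f - smult \<epsilon> h'"
      have "nonneg_poly g" unfolding nonneg_poly_def
      proof
        fix i
        show "0 \<le> coeff g i"
        proof (cases "i \<in> I")
          case True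
          then have pos: "coeff h' i > 0" unfolding I_def by simp
          have "\<epsilon> * coeff h' i \<le> coeff f i" using epsle[OF True] pos by (simp add: field_simps)
          then show ?thesis unfolding g_def by simp
        next
          case False
          then have "coeff h' i \<le> 0" unfolding I_def by simp
          then have "\<epsilon> * coeff h' i \<le> 0" using eps by (simp add: mult_nonneg_nonpos)
          then show ?thesis unfolding g_def using fnn[of i] by simp
        qed
      qed
      moreover have "interpolates g S"
        unfolding interpolates_def
      proof (intro ballI, clarify)
        fix a b assume ab: "(a, b) \<in> S"
        then have "a \<in> A" unfolding A_def by force
        then have "poly h a = 0" using h(3) by blast
        then have "poly g a = poly f a" unfolding g_def h'_def by simp
        then show "poly g a = b" using assms(3) ab unfolding interpolates_def by auto
      qed
      ultimately have "g = f" using uniq by blast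
      then have "smult \<epsilon> h' = 0" unfolding g_def by simp
      then show False using eps h'0 by simp
    qed
    have "minimal_poly_of ?T f"
      unfolding minimal_poly_of_def
    proof (intro conjI)
      show "admissible_data ?T" using assms(1) unfolding admissible_data_def
        by (auto intro: inj_on_subset)
      show "nonneg_poly f" by (rule assms(2))
      show "interpolates f ?T" using assms(3) unfolding interpolates_def by auto
      show "dd_poly f \<le> card ?T" by (rule ddle)
    qed
    then show "\<exists>T. T \<subset> S \<and> minimal_poly_of T f" using TS by blast
  next
    assume "\<exists>T. T \<subset> S \<and> minimal_poly_of T f"
    then obtain T where T: "T \<subset> S" "minimal_poly_of T f" by blast
    have ddT: "dd (Sign f) \<le> card T" using T(2) unfolding minimal_poly_of_def dd_poly_def by simp
    have TltS: "card T < card S" using psubset_card_mono[OF finS T(1)] .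
    show "\<forall>g. nonneg_poly g \<and> interpolates g S \<longrightarrow> g = f"
    proof (intro allI impI, erule conjE, rule ccontr)
      fix g assume gnn: "nonneg_poly g" and gi: "interpolates g S" and ne: "g \<noteq> f"
      define h where "h = f - g"
      have h0: "h \<noteq> 0" using ne unfolding h_def by simp
      have "A \<subseteq> {x. 0 < x \<and> poly h x = 0}" using Apos fA[OF gi] unfolding h_def by auto
      moreover have "finite {x. 0 < x \<and> poly h x = 0}"
        using poly_roots_finite[OF h0] by (rule rev_finite_subset) auto
      ultimately have "card A \<le> card {x. 0 < x \<and> poly h x = 0}" by (rule card_mono[rotated])
      also have "\<dots> \<le> SC (Sign h)" by (rule descartes[OF h0])
      also have "\<dots> \<le> dd (Sign f)"
      proof -
        have "\<forall>i. Sign h i \<in> {-1, 0, Sign f i}"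
        proof
          fix i
          show "Sign h i \<in> {-1, 0, Sign f i}"
          proof (cases "coeff f i > 0")
            case True
            then show ?thesis using Sign_vals[of h i] by (simp add: Sign_def)
          next
            case False
            then have "coeff f i = 0" using fnn[of i] by simp
            moreover have "coeff g i \<ge> 0" using gnn unfolding nonneg_poly_def by simp
            ultimately have "coeff h i \<le> 0" unfolding h_def by simp
            then show ?thesis by (simp add: Sign_def)
          qed
        qed
        then have "SC (Sign h) \<in> dset (Sign f)" unfolding dset_def using Sign_sign_seq by blast
        then show ?thesis unfolding dd_dset using dset_fin by (rule Max_ge[rotated])
      qed
      finally show False using ddT TltS cA by simp
    qed
  qed
qed


end
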